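(* Consider the multi-resource General Lotto game with the weakest-link winning rule $W_{\mathrm{WL}}$, budgets $\boldsymbol X=(X_1,\dots,X_T)$ with $X_t>0$ for all $t\in\mathcal T$ and $\boldsymbol Y=(Y_1,\dots,Y_T)\in\mathbb R_{\ge 0}^T$, and contest values $\boldsymbol v$. Let $\alpha=\alpha(\boldsymbol X,\boldsymbol Y)=\sum_{t\in\mathcal T} Y_t/X_t$. Then the game has an equilibrium, and in every equilibrium the payoff to player $\mathcal X$ is $L(\alpha)$ and the payoff to player $\mathcal Y$ is $1-L(\alpha)$. Moreover, an equilibrium $(F^*_{\mathcal X},F^*_{\mathcal Y})\in\mathbb F(\boldsymbol X)\times\mathbb F(\boldsymbol Y)$ is given by any strategies (e.g. the independent product over contests) whose $c$-marginals are, for all $c\in\mathcal C$ and $\boldsymbol u\in\mathbb R^T_{\ge0}$: if $\alpha\le 1$, $$F^*_{\mathcal X,c}(\boldsymbol u)=\min_{t\in\mathcal T}\min\Big\{\frac{u_t}{2v_cX_t},1\Big\},\qquad F^*_{\mathcal Y,c}(\boldsymbol u)=1-\alpha+\alpha\sum_{t\in\mathcal T}\frac{Y_t/X_t}{\alpha}\min\Big\{\frac{u_t}{2v_cX_t},1\Big\}$$ (when $\alpha=0$ the second expression is read as $F^*_{\mathcal Y,c}\equiv 1$); if $\alpha>1$, $$F^*_{\mathcal X,c}(\boldsymbol u)=1-\frac1\alpha+\frac1\alpha\min_{t\in\mathcal T}\min\Big\{\frac{u_t}{2v_cX_t\alpha},1\Big\},\qquad F^*_{\mathcal Y,c}(\boldsymbol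 u)=\sum_{t\in\mathcal T}\frac{Y_t/X_t}{\alpha}\min\Big\{\frac{u_t}{2v_cX_t\alpha},1\Big\}.$$
   Context: Contests $\mathcal C=\{1,\dots,C\}$ ($C\ge1$) have values $v_c>0$ with $\sum_{c}v_c=1$. Resource types $\mathcal T=\{1,\dots,T\}$, $T\ge1$. A pure allocation of player $\mathcal X$ is $\mathbf x=(\boldsymbol x_1,\dots,\boldsymbol x_C)\in\mathbb R_{\ge0}^{CT}$ with $\boldsymbol x_c=(x_{c,1},\dots,x_{c,T})$, where $x_{c,t}$ is the amount of type-$t$ resource sent to contest $c$; similarly $\mathbf y$ for player $\mathcal Y$. The strategy set $\mathbb F(\boldsymbol X)$ is the set of probability distributions $F$ on $\mathbb R_{\ge0}^{CT}$ with $\mathbb E_{\mathbf x\sim F}[\sum_{c\in\mathcal C}x_{c,t}]\le X_t$ for every $t\in\mathcal T$ (budgets hold only in expectation); $\mathbb F(\boldsymbol Y)$ likewise. The weakest-link rule is $W_{\mathrm{WL}}(\boldsymbol x,\boldsymbol y)=1$ if $x_t\ge y_t$ for all $t\in\mathcal T$ and $0$ otherwise (so $\mathcal Y$ wins a contest iff $y_t>x_t$ for some $t$). For $(F_{\mathcal X},F_{\mathcal Y})$, $\pi_{\mathcal X}(F_{\mathcal X},F_{\mathcal Y})=\mathbb E_{\mathbf x\sim F_{\mathcal X},\mathbf y\sim F_{\mathcal Y}}[\sum_c v_cW_{\mathrm{WL}}(\boldsymbol x_c,\boldsymbol y_c)]$ with $\mathbf x,\mathbf y$ independent, and $\pi_{\mathcal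 Y}=1-\pi_{\mathcal X}$. An equilibrium is $(F^*_{\mathcal X},F^*_{\mathcal Y})$ with $\pi_{\mathcal X}(F_{\mathcal X},F^*_{\mathcal Y})\le\pi_{\mathcal X}(F^*_{\mathcal X},F^*_{\mathcal Y})\le\pi_{\mathcal X}(F^*_{\mathcal X},F_{\mathcal Y})$ for all $F_{\mathcal X}\in\mathbb F(\boldsymbol X)$, $F_{\mathcal Y}\in\mathbb F(\boldsymbol Y)$. The $c$-marginal of $F$ is $F_c(\boldsymbol u)=\mathbb P_{\mathbf x\sim F}[x_{c,t}\le u_t\ \forall t\in\mathcal T]$ for $\boldsymbol u\in\mathbb R^T_{\ge0}$. The function $L:[0,\infty)\to(0,1]$ is $L(\alpha)=1-\alpha/2$ if $\alpha\le1$ and $L(\alpha)=1/(2\alpha)$ if $\alpha>1$. *)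

theory Defs
  imports "HOL-Probability.Probability"
begin

text \<open>Pure allocations are vectors x :: real^'t^'c, where x$c$t is the amount of
  type-t resource sent to contest c. Contests and resource types are finite types.\<close>

definition L :: "real \<Rightarrow> real" where
  "L \<alpha> = (if \<alpha> \<le> 1 then 1 - \<alpha> / 2 else 1 / (2 * \<alpha>))"

definition W_WL :: "real^'t::finite \<Rightarrow> real^'t \<Rightarrow> real" where
  "W_WL a b = (if \<forall>t. b$t \<le> a$t then 1 else 0)"

definition strategies :: "('t::finite \<Rightarrow> real) \<Rightarrow> (real^'t^'c::finite) measure set" where
  "strategies B = {M. prob_space M \<and> sets M = sets borel \<and>
      (AE x in M. \<forall>c t. 0 \<le> x$c$t) \<and>
      (\<forall>t. (\<integral>\<^sup>+ x. ennreal (\<Sum>c\<in>UNIV. x$c$t) \<partial>M) \<le> ennreal (B t))}"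

definition payoff_X :: "('c::finite \<Rightarrow> real) \<Rightarrow> (real^'t::finite^'c) measure
    \<Rightarrow> (real^'t^'c) measure \<Rightarrow> real" where
  "payoff_X v F G = (\<integral> z. (\<Sum>c\<in>UNIV. v c * W_WL (fst z $ c) (snd z $ c)) \<partial>(F \<Otimes>\<^sub>M G))"

definition payoff_Y :: "('c::finite \<Rightarrow> real) \<Rightarrow> (real^'t::finite^'c) measure
    \<Rightarrow> (real^'t^'c) measure \<Rightarrow> real" where
  "payoff_Y v F G = 1 - payoff_X v F G"

definition equilibrium :: "('c::finite \<Rightarrow> real) \<Rightarrow> ('t::finite \<Rightarrow> real) \<Rightarrow> ('t \<Rightarrow> real)
    \<Rightarrow> (real^'t^'c) measure \<Rightarrow> (real^'t^'c) measure \<Rightarrow> bool" where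
  "equilibrium v X Y F G \<longleftrightarrow> F \<in> strategies X \<and> G \<in> strategies Y \<and>
     (\<forall>F'\<in>strategies X. payoff_X v F' G \<le> payoff_X v F G) \<and>
     (\<forall>G'\<in>strategies Y. payoff_X v F G \<le> payoff_X v F G')"

definition marginal :: "(real^'t::finite^'c::finite) measure \<Rightarrow> 'c \<Rightarrow> real^'t \<Rightarrow> real" where
  "marginal F c u = measure F {x. \<forall>t. x$c$t \<le> u$t}"

definition alpha :: "('t::finite \<Rightarrow> real) \<Rightarrow> ('t \<Rightarrow> real) \<Rightarrow> real" where
  "alpha X Y = (\<Sum>t\<in>UNIV. Y t / X t)"

definition FX_star :: "('c::finite \<Rightarrow> real) \<Rightarrow> ('t::finite \<Rightarrow> real) \<Rightarrow> ('t \<Rightarrow> real)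
    \<Rightarrow> 'c \<Rightarrow> real^'t \<Rightarrow> real" where
  "FX_star v X Y c u = (let a = alpha X Y in
     if a \<le> 1 then Min ((\<lambda>t. min (u$t / (2 * v c * X t)) 1) ` UNIV)
     else 1 - 1 / a + (1 / a) * Min ((\<lambda>t. min (u$t / (2 * v c * X t * a)) 1) ` UNIV))"

definition FY_star :: "('c::finite \<Rightarrow> real) \<Rightarrow> ('t::finite \<Rightarrow> real) \<Rightarrow> ('t \<Rightarrow> real)
    \<Rightarrow> 'c \<Rightarrow> real^'t \<Rightarrow> real" where
  "FY_star v X Y c u = (let a = alpha X Y in
     if a = 0 then 1
     else if a \<le> 1 then 1 - a + a * (\<Sum>t\<in>UNIV. (Y t / X t) / a * min (u$t / (2 * v c * X t)) 1)
     else (\<Sum>t\<in>UNIV. (Y t / X t) / a * min (u$t / (2 * v c * X t * a)) 1))"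

end

theory Submission imports Defs begin


definition U :: "real measure" where "U = uniform_measure lborel {0..1}"

lemma U_prob: "prob_space U"
  unfolding U_def by (rule prob_space_uniform_measure) auto

lemma sets_U[simp, measurable_cong]: "sets U = sets borel"
  unfolding U_def by simp

lemma space_U[simp]: "space U = UNIV"
  unfolding U_def by simp

lemma nn_integral_U:
  assumes [measurable]: "f \<in> borel_measurable borel"
  shows "(\<integral>\<^sup>+x. f x \<partial>U) = (\<integral>\<^sup>+x. f x * indicator {0..1} x \<partial>lborel)"
  unfolding U_def by (subst nn_integral_uniform_measure) (auto simp: divide_ennreal_def)

lemma emeasure_U:
  assumes [measurable]: "B \<in> sets borel"
  shows "emeasure U B = emeasure lborel ({0..1} \<inter> B)"
  unfolding U_def by (subst emeasure_uniform_measure) (auto simp: divide_ennreal_def)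

lemma measure_U_le:
  assumes "0 \<le> m" 
  shows "measure U {s. s \<le> m} = min m 1"
proof -
  have "{0..1} \<inter> {s. s \<le> m} = {0..min m 1}" by auto
  then have "emeasure U {s. s \<le> m} = ennreal (min m 1)"
    using assms by (subst emeasure_U) auto
  then show ?thesis using assms by (simp add: measure_def)
qed

lemma measure_U_ge:
  assumes "0 \<le> a"
  shows "measure U {s. a \<le> s} \<ge> 1 - a"
proof (cases "a \<le> 1")
  case True
  have "{0..1} \<inter> {s. a \<le> s} = {a..1}" using assms by auto
  then have "emeasure U {s. a \<le> s} = ennreal (1 - a)"
    using assms True by (subst emeasure_U) auto
  then show ?thesis using True by (simp add: measure_def)
next
  case False then show ?thesis by (simp add: measure_nonneg order_trans[of _ 0])
qed

lemma nn_integral_U_abs: "(\<integral>\<^sup>+s. ennreal \<bar>s\<bar> \<partial>U) = ennreal (1/2)"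
proof -
  have "(\<integral>\<^sup>+s. ennreal \<bar>s\<bar> \<partial>U) = (\<integral>\<^sup>+x. ennreal (indicator {0..1} x * x) \<partial>lborel)"
    by (subst nn_integral_U) (auto intro!: nn_integral_cong split: split_indicator)
  also have "\<dots> = ennreal (1/2)"
  proof (rule nn_integral_has_integral_lebesgue)
    have "((\<lambda>x. x) has_integral ((\<lambda>x. x^2/2) 1 - (\<lambda>x. x^2/2) 0)) {0..1::real}"
      by (rule fundamental_theorem_of_calculus)
        (auto intro!: derivative_eq_intros simp: has_real_derivative_iff_has_vector_derivative[symmetric])
    then show "((\<lambda>x. x) has_integral 1/2) {0..1::real}" by simp
  qed auto
  finally show ?thesis .
qed



definition mix :: "'a::finite pmf \<Rightarrow> ('a \<Rightarrow> real \<Rightarrow> 'b::topological_space) \<Rightarrow> 'b measure" where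
  "mix P g = distr (measure_pmf P \<Otimes>\<^sub>M U) borel (\<lambda>z. g (fst z) (snd z))"

lemma mix_meas:
  fixes g :: "'a::finite \<Rightarrow> real \<Rightarrow> 'b::topological_space"
  assumes "\<And>a. g a \<in> borel_measurable borel"
  shows "(\<lambda>z. g (fst z) (snd z)) \<in> measurable (measure_pmf P \<Otimes>\<^sub>M U) borel"
proof -
  have "sets (measure_pmf P \<Otimes>\<^sub>M U) = sets (count_space UNIV \<Otimes>\<^sub>M borel)"
    by (intro sets_pair_measure_cong) auto
  moreover have "(\<lambda>z. g (fst z) (snd z)) \<in> measurable (count_space UNIV \<Otimes>\<^sub>M borel) borel"
    by (rule measurable_pair_measure_countable1) (auto intro: assms intro!: countable_finite)
  ultimately show ?thesis using measurable_cong_sets by blast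
qed

lemma mix_prob:
  assumes "\<And>a. g a \<in> borel_measurable borel"
  shows "prob_space (mix P g)"
  unfolding mix_def
  by (rule prob_space.prob_space_distr[OF prob_space_pair[OF prob_space_measure_pmf U_prob] mix_meas[OF assms]])

lemma sets_mix[simp]: "sets (mix P g) = sets borel"
  unfolding mix_def by simp

lemma space_mix[simp]: "space (mix P g) = UNIV"
  unfolding mix_def by simp

lemma mix_nn:
  assumes g: "\<And>a. g a \<in> borel_measurable borel" and f[measurable]: "f \<in> borel_measurable borel"
  shows "(\<integral>\<^sup>+x. f x \<partial>mix P g) = (\<Sum>a\<in>UNIV. ennreal (pmf P a) * (\<integral>\<^sup>+s. f (g a s) \<partial>U))"
proof -
  interpret U: prob_space U by (rule U_prob)
  have m: "(\<lambda>z. g (fst z) (snd z)) \<in> measurable (measure_pmf P \<Otimes>\<^sub>M U) borel"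
    by (rule mix_meas[OF g])
  have "(\<integral>\<^sup>+x. f x \<partial>mix P g) = (\<integral>\<^sup>+z. f (g (fst z) (snd z)) \<partial>(measure_pmf P \<Otimes>\<^sub>M U))"
    unfolding mix_def by (rule nn_integral_distr[OF m]) simp
  also have "\<dots> = (\<integral>\<^sup>+a. \<integral>\<^sup>+s. f (g a s) \<partial>U \<partial>measure_pmf P)"
    by (subst U.nn_integral_fst[symmetric]) (auto intro: measurable_compose[OF m])
  also have "\<dots> = (\<Sum>a\<in>UNIV. ennreal (pmf P a) * (\<integral>\<^sup>+s. f (g a s) \<partial>U))"
    by (simp add: nn_integral_measure_pmf nn_integral_count_space_finite)
  finally show ?thesis .
qed

lemma mix_emeasure:
  assumes g: "\<And>a. g a \<in> borel_measurable borel" and A[measurable]: "A \<in> sets borel"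
  shows "emeasure (mix P g) A = (\<Sum>a\<in>UNIV. ennreal (pmf P a) * emeasure U {s. g a s \<in> A})"
proof -
  have "emeasure (mix P g) A = (\<integral>\<^sup>+x. indicator A x \<partial>mix P g)"
    by (simp add: nn_integral_indicator)
  also have "\<dots> = (\<Sum>a\<in>UNIV. ennreal (pmf P a) * (\<integral>\<^sup>+s. indicator A (g a s) \<partial>U))"
    by (rule mix_nn[OF g]) simp
  also have "\<dots> = (\<Sum>a\<in>UNIV. ennreal (pmf P a) * emeasure U {s. g a s \<in> A})"
  proof (intro sum.cong refl arg_cong2[where f="(*)"])
    fix a
    have [measurable]: "g a \<in> borel_measurable borel" by (rule g)
    have "(\<integral>\<^sup>+s. indicator A (g a s) \<partial>U) = (\<integral>\<^sup>+s. indicator {s. g a s \<in> A} s \<partial>U)"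
      by (intro nn_integral_cong) (simp split: split_indicator)
    also have "\<dots> = emeasure U {s. g a s \<in> A}"
      by (subst nn_integral_indicator) auto
    finally show "(\<integral>\<^sup>+s. indicator A (g a s) \<partial>U) = emeasure U {s. g a s \<in> A}" .
  qed
  finally show ?thesis .
qed

lemma mix_measure:
  assumes g: "\<And>a. g a \<in> borel_measurable borel" and A[measurable]: "A \<in> sets borel"
  shows "measure (mix P g) A = (\<Sum>a\<in>UNIV. pmf P a * measure U {s. g a s \<in> A})"
proof -
  interpret U: prob_space U by (rule U_prob)
  have "emeasure (mix P g) A = ennreal (\<Sum>a\<in>UNIV. pmf P a * measure U {s. g a s \<in> A})"
    unfolding mix_emeasure[OF g A] U.emeasure_eq_measure
    by (simp add: ennreal_mult'[symmetric] sum_nonneg)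
  then show ?thesis
    by (simp add: measure_def sum_nonneg)
qed



lemma vec_nth_meas[measurable]: "(\<lambda>x::'a::real_normed_vector^'n. x $ i) \<in> borel_measurable borel"
  by (intro borel_measurable_continuous_onI continuous_on_component continuous_on_id)

lemma W_WL_ind: "W_WL a b = indicator {y. \<forall>t. y$t \<le> a$t} b"
  unfolding W_WL_def by (simp split: split_indicator)

lemma W_meas: "(\<lambda>z. \<Sum>c\<in>UNIV. v c * W_WL (fst z $ c) (snd z $ c)) \<in> borel_measurable ((borel::(real^'t::finite^'c::finite) measure) \<Otimes>\<^sub>M borel)"
  unfolding W_WL_def by measurable

lemma set_meas1[measurable]: "{y::real^'t::finite^'c::finite. \<forall>t. y$c$t \<le> x$c$t} \<in> sets borel"
  by measurable

lemma set_meas2[measurable]: "{x::real^'t::finite^'c::finite. \<forall>t. y$c$t \<le> x$c$t} \<in> sets borel"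
  by measurable

lemma payoff_fubini:
  fixes F G :: "(real^'t::finite^'c::finite) measure"
  assumes F: "prob_space F" "sets F = sets borel" and G: "prob_space G" "sets G = sets borel"
  shows "payoff_X v F G = (\<integral>x. (\<Sum>c\<in>UNIV. v c * measure G {y. \<forall>t. y$c$t \<le> x$c$t}) \<partial>F)"
    and "integrable F (\<lambda>x. \<Sum>c\<in>UNIV. v c * measure G {y. \<forall>t. y$c$t \<le> x$c$t})"
    and "payoff_X v F G = (\<integral>y. (\<Sum>c\<in>UNIV. v c * measure F {x. \<forall>t. y$c$t \<le> x$c$t}) \<partial>G)"
    and "integrable G (\<lambda>y. \<Sum>c\<in>UNIV. v c * measure F {x. \<forall>t. y$c$t \<le> x$c$t})"
proof -
  interpret F: prob_space F by (rule F(1))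
  interpret G: prob_space G by (rule G(1))
  interpret FG: pair_prob_space F G ..
  have fin: "finite_measure (F \<Otimes>\<^sub>M G)" using prob_space_pair[OF F(1) G(1)] by (simp add: prob_space_def)
  have spF: "space F = UNIV" using sets_eq_imp_space_eq[OF F(2)] by simp
  have spG: "space G = UNIV" using sets_eq_imp_space_eq[OF G(2)] by simp
  define f where "f x y = (\<Sum>c\<in>UNIV. v c * W_WL (x $ c) (y $ c))" for x y :: "real^'t^'c"
  have sets: "sets (F \<Otimes>\<^sub>M G) = sets (borel \<Otimes>\<^sub>M borel)"
    by (intro sets_pair_measure_cong F(2) G(2))
  have meas: "case_prod f \<in> borel_measurable (F \<Otimes>\<^sub>M G)"
    using W_meas[of v] unfolding f_def measurable_cong_sets[OF sets refl]
    by (simp add: case_prod_beta')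
  have int: "integrable (F \<Otimes>\<^sub>M G) (case_prod f)"
  proof (rule finite_measure.integrable_const_bound[OF fin, where B="\<Sum>c\<in>UNIV. \<bar>v c\<bar>"])
    show "AE x in F \<Otimes>\<^sub>M G. norm (case_prod f x) \<le> (\<Sum>c\<in>UNIV. \<bar>v c\<bar>)"
    proof (intro AE_I2)
      fix z :: "(real^'t^'c) \<times> (real^'t^'c)"
      have "norm (case_prod f z) \<le> (\<Sum>c\<in>UNIV. \<bar>v c * W_WL (fst z $ c) (snd z $ c)\<bar>)"
        unfolding f_def by (simp add: case_prod_beta sum_abs)
      also have "\<dots> \<le> (\<Sum>c\<in>UNIV. \<bar>v c\<bar>)"
        by (intro sum_mono) (simp add: W_WL_def abs_mult)
      finally show "norm (case_prod f z) \<le> (\<Sum>c\<in>UNIV. \<bar>v c\<bar>)" .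
    qed
  qed (rule meas)
  have pay: "payoff_X v F G = integral\<^sup>L (F \<Otimes>\<^sub>M G) (case_prod f)"
    unfolding payoff_X_def f_def by (simp add: case_prod_beta')
  have inner1: "(\<integral>y. f x y \<partial>G) = (\<Sum>c\<in>UNIV. v c * measure G {y. \<forall>t. y$c$t \<le> x$c$t})" for x
  proof -
    have e: "\<And>y. f x y = (\<Sum>c\<in>UNIV. v c * indicator {y. \<forall>t. y$c$t \<le> x$c$t} y)"
      unfolding f_def W_WL_def indicator_def by (intro sum.cong refl) simp
    have "(\<integral>y. f x y \<partial>G) = (\<Sum>c\<in>UNIV. (\<integral>y. v c * indicator {y. \<forall>t. y$c$t \<le> x$c$t} y \<partial>G))"
      unfolding e by (rule Bochner_Integration.integral_sum[where f="\<lambda>c y. v c * indicator {y. \<forall>t. y$c$t \<le> x$c$t} y"]) (auto intro!: integrable_mult_right G.integrable_const_bound[where B=1] borel_measurable_indicator simp: measurable_cong_sets[OF G(2) refl] G(2) split: split_indicator)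
    then have "(\<integral>y. f x y \<partial>G) = (\<Sum>c\<in>UNIV. v c * (\<integral>y. indicator {y. \<forall>t. y$c$t \<le> x$c$t} y \<partial>G))"
      by simp
    then show ?thesis by (simp add: spG)
  qed
  have inner2: "(\<integral>x. f x y \<partial>F) = (\<Sum>c\<in>UNIV. v c * measure F {x. \<forall>t. y$c$t \<le> x$c$t})" for y
  proof -
    have e: "\<And>x. f x y = (\<Sum>c\<in>UNIV. v c * indicator {x. \<forall>t. y$c$t \<le> x$c$t} x)"
      unfolding f_def W_WL_def indicator_def by (intro sum.cong refl) simp
    have "(\<integral>x. f x y \<partial>F) = (\<Sum>c\<in>UNIV. (\<integral>x. v c * indicator {x. \<forall>t. y$c$t \<le> x$c$t} x \<partial>F))"
      unfolding e by (rule Bochner_Integration.integral_sum[where f="\<lambda>c x. v c * indicator {x. \<forall>t. y$c$t \<le> x$c$t} x"]) (auto intro!: integrable_mult_right F.integrable_const_bound[where B=1] borel_measurable_indicator simp: measurable_cong_sets[OF F(2) refl] F(2) split: split_indicator)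
    then have "(\<integral>x. f x y \<partial>F) = (\<Sum>c\<in>UNIV. v c * (\<integral>x. indicator {x. \<forall>t. y$c$t \<le> x$c$t} x \<partial>F))"
      by simp
    then show ?thesis by (simp add: spF)
  qed
  show "payoff_X v F G = (\<integral>x. (\<Sum>c\<in>UNIV. v c * measure G {y. \<forall>t. y$c$t \<le> x$c$t}) \<partial>F)"
    using FG.integral_fst[OF int] pay inner1 by simp
  show "integrable F (\<lambda>x. \<Sum>c\<in>UNIV. v c * measure G {y. \<forall>t. y$c$t \<le> x$c$t})"
    using FG.integrable_fst[OF int] inner1 by simp
  show "payoff_X v F G = (\<integral>y. (\<Sum>c\<in>UNIV. v c * measure F {x. \<forall>t. y$c$t \<le> x$c$t}) \<partial>G)"
    using FG.integral_snd[OF int] pay inner2 by simp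
  show "integrable G (\<lambda>y. \<Sum>c\<in>UNIV. v c * measure F {x. \<forall>t. y$c$t \<le> x$c$t})"
    using FG.integrable_snd[OF int] inner2 by simp
qed



lemma strat_basic:
  assumes "F \<in> strategies B"
  shows "prob_space F" "sets F = sets borel" "space F = UNIV" "AE x in F. \<forall>c t. 0 \<le> x$c$t"
  using assms sets_eq_imp_space_eq[of F borel] unfolding strategies_def by auto

lemma strat_budget:
  fixes F :: "(real^'t::finite^'c::finite) measure"
  assumes F: "F \<in> strategies B" and B: "0 \<le> B t"
  shows "integrable F (\<lambda>x. \<Sum>c\<in>UNIV. x$c$t)" "(\<integral>x. (\<Sum>c\<in>UNIV. x$c$t) \<partial>F) \<le> B t"
proof -
  note sb = strat_basic[OF F]
  have m: "(\<lambda>x. \<Sum>c\<in>UNIV. x$c$t) \<in> borel_measurable F"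
    unfolding measurable_cong_sets[OF sb(2) refl] by measurable
  have nn: "AE x in F. 0 \<le> (\<Sum>c\<in>UNIV. x$c$t)"
    using sb(4) by eventually_elim (auto intro: sum_nonneg)
  have le: "(\<integral>\<^sup>+x. ennreal (\<Sum>c\<in>UNIV. x$c$t) \<partial>F) \<le> ennreal (B t)"
    using F unfolding strategies_def by auto
  then show "integrable F (\<lambda>x. \<Sum>c\<in>UNIV. x$c$t)"
    by (intro integrableI_nonneg[OF m nn]) (auto simp: le_less_trans)
  show "(\<integral>x. (\<Sum>c\<in>UNIV. x$c$t) \<partial>F) \<le> B t"
    unfolding integral_eq_nn_integral[OF m nn] using le B by (intro enn2real_leI) auto
qed

lemma marg_unique:
  fixes F G :: "(real^'t::finite^'c::finite) measure"
  assumes F: "prob_space F" "sets F = sets borel" "AE x in F. \<forall>c t. 0 \<le> x$c$t"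
    and G: "prob_space G" "sets G = sets borel" "AE x in G. \<forall>c t. 0 \<le> x$c$t"
    and eq: "\<And>u. (\<forall>t. 0 \<le> u$t) \<Longrightarrow> marginal F c u = marginal G c u"
  shows "distr F borel (\<lambda>x. x$c) = distr G borel (\<lambda>x. x$c)"
proof -
  interpret F: prob_space F by (rule F(1))
  interpret G: prob_space G by (rule G(1))
  have spF: "space F = UNIV" using sets_eq_imp_space_eq[OF F(2)] by simp
  have spG: "space G = UNIV" using sets_eq_imp_space_eq[OF G(2)] by simp
  have mF: "(\<lambda>x. x$c) \<in> measurable F borel"
    unfolding measurable_cong_sets[OF F(2) refl] by measurable
  have mG: "(\<lambda>x. x$c) \<in> measurable G borel"
    unfolding measurable_cong_sets[OF G(2) refl] by measurable
  let ?E = "range (\<lambda>a::real^'t. {..a})"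
  have sb: "sets (borel :: (real^'t) measure) = sigma_sets UNIV ?E"
    by (subst borel_eq_atMost) (simp add: sets_measure_of)
  show ?thesis
  proof (rule measure_eqI_generator_eq[where E="?E" and \<Omega>=UNIV and A="\<lambda>i. {..(\<chi> t. real i)}"])
    show "Int_stable ?E"
    proof (rule Int_stableI)
      fix a b assume "a \<in> ?E" "b \<in> ?E"
      then obtain p q where pq: "a = {..p}" "b = {..q}" by auto
      have "a \<inter> b = {..(\<chi> t. min (p$t) (q$t))}"
        unfolding pq by (auto simp: less_eq_vec_def)
      then show "a \<inter> b \<in> ?E" by blast
    qed
    show "?E \<subseteq> Pow UNIV" by auto
    show "sets (distr F borel (\<lambda>x. x$c)) = sigma_sets UNIV ?E" using sb by simp
    show "sets (distr G borel (\<lambda>x. x$c)) = sigma_sets UNIV ?E" using sb by simp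
    show "range (\<lambda>i. {..(\<chi> t. real i)}) \<subseteq> ?E" by auto
    show "(\<Union>i. {..(\<chi> t. real i)}) = (UNIV :: (real^'t) set)"
    proof (safe; simp)
      fix z :: "real^'t"
      obtain k :: nat where "Max (range (\<lambda>t. z$t)) \<le> real k" using real_arch_simple by blast
      then have "\<forall>t. z$t \<le> real k" by (subst (asm) Max_le_iff) auto
      then show "\<exists>i. z \<le> (\<chi> t. real i)" by (auto simp: less_eq_vec_def)
    qed
    show "emeasure (distr F borel (\<lambda>x. x$c)) {..(\<chi> t. real i)} \<noteq> \<infinity>" for i
      using finite_measure.emeasure_finite[of "distr F borel (\<lambda>x. x$c)"] F.prob_space_distr[OF mF]
      by (simp add: prob_space_def)
    fix X assume "X \<in> ?E"
    then obtain a where X: "X = {..a}" by auto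
    have pre: "(\<lambda>x. x$c) -` {..a} = {x. \<forall>t. x$c$t \<le> a$t}"
      by (auto simp: less_eq_vec_def)
    have eF: "emeasure (distr F borel (\<lambda>x. x$c)) X = emeasure F {x. \<forall>t. x$c$t \<le> a$t}"
      unfolding X using mF by (subst emeasure_distr) (auto simp: pre spF)
    have eG: "emeasure (distr G borel (\<lambda>x. x$c)) X = emeasure G {x. \<forall>t. x$c$t \<le> a$t}"
      unfolding X using mG by (subst emeasure_distr) (auto simp: pre spG)
    show "emeasure (distr F borel (\<lambda>x. x$c)) X = emeasure (distr G borel (\<lambda>x. x$c)) X"
    proof (cases "\<forall>t. 0 \<le> a$t")
      case True
      then show ?thesis unfolding eF eG F.emeasure_eq_measure G.emeasure_eq_measure
        using eq[OF True] unfolding marginal_def by simp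
    next
      case False
      then obtain t0 where t0: "a$t0 < 0" by (auto simp: not_le)
      have "AE x in F. \<not> (\<forall>t. x$c$t \<le> a$t)"
        using F(3) by eventually_elim (use t0 in \<open>metis not_le order_less_le_trans\<close>)
      from emeasure_eq_0_AE[OF this] have 1: "emeasure F {x. \<forall>t. x$c$t \<le> a$t} = 0" by (simp add: spF)
      have "AE x in G. \<not> (\<forall>t. x$c$t \<le> a$t)"
        using G(3) by eventually_elim (use t0 in \<open>metis not_le order_less_le_trans\<close>)
      from emeasure_eq_0_AE[OF this] have 2: "emeasure G {x. \<forall>t. x$c$t \<le> a$t} = 0" by (simp add: spG)
      show ?thesis unfolding eF eG 1 2 ..
    qed
  qed
qed



locale game =
  fixes v :: "'c::finite \<Rightarrow> real" and X Y :: "'t::finite \<Rightarrow> real"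
  assumes v_pos: "\<And>c. v c > 0"
    and v_sum: "(\<Sum>c\<in>UNIV. v c) = 1"
    and X_pos: "\<And>t. X t > 0"
    and Y_nonneg: "\<And>t. Y t \<ge> 0"
begin

definition "a = alpha X Y"
definition "b = max 1 a"

lemma a_nonneg: "0 \<le> a"
  unfolding a_def alpha_def by (intro sum_nonneg divide_nonneg_pos Y_nonneg X_pos)

lemma b_ge1: "1 \<le> b" and b_ge_a: "a \<le> b" and b_pos: "0 < b"
  unfolding b_def by auto

lemma b_cases: "(a \<le> 1 \<and> b = 1) \<or> (1 < a \<and> b = a)"
  unfolding b_def by auto

lemma L_b: "L a = 1 / b - a / (2 * b^2)" "L a = 1 - a / b + a / (2 * b^2)"
  using b_cases unfolding L_def by (auto simp: field_simps power2_eq_square)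

definition k :: "'c \<Rightarrow> 't \<Rightarrow> real" where "k c t = 2 * v c * X t * b"

lemma k_pos: "0 < k c t"
  unfolding k_def using v_pos X_pos b_pos by auto

definition gX :: "bool \<Rightarrow> real \<Rightarrow> real^'t^'c" where
  "gX bb s = (\<chi> c t. (if bb then k c t else 0) * \<bar>s\<bar>)"

definition fY :: "'t option \<Rightarrow> real" where
  "fY q = (case q of None \<Rightarrow> 1 - a / b | Some t \<Rightarrow> Y t / X t / b)"

definition gY :: "'t option \<Rightarrow> real \<Rightarrow> real^'t^'c" where
  "gY q s = (\<chi> c t. (if q = Some t then k c t else 0) * \<bar>s\<bar>)"

definition "PX = bernoulli_pmf (1 / b)"
definition "PY = embed_pmf fY"
definition "MX = mix PX gX"
definition "MY = mix PY gY"

lemma sum_option: fixes h :: "'t option \<Rightarrow> 'z::comm_monoid_add" shows "(\<Sum>q\<in>UNIV. h q) = h None + (\<Sum>t\<in>UNIV. h (Some t))"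
proof -
  have "(\<Sum>q\<in>UNIV. h q) = (\<Sum>q\<in>insert None (range Some). h q)" by (simp add: UNIV_option_conv)
  also have "\<dots> = h None + (\<Sum>q\<in>range Some. h q)" by (subst sum.insert) (auto intro: finite_imageI)
  also have "\<dots> = h None + (\<Sum>t\<in>UNIV. h (Some t))" by (subst sum.reindex) auto
  finally show ?thesis .
qed

lemma fY_nonneg: "0 \<le> fY q"
  using b_ge_a b_pos X_pos Y_nonneg by (cases q) (auto simp: fY_def intro!: divide_nonneg_pos)

lemma fY_sum: "(\<Sum>q\<in>UNIV. fY q) = 1"
proof -
  have "(\<Sum>t\<in>UNIV. Y t / X t / b) = a / b"
    unfolding a_def alpha_def by (simp add: sum_divide_distrib)
  then show ?thesis unfolding sum_option fY_def by simp
qed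

lemma pmf_PY: "pmf PY q = fY q"
  unfolding PY_def
proof (rule pmf_embed_pmf)
  show "\<And>x. 0 \<le> fY x" by (rule fY_nonneg)
  show "(\<integral>\<^sup>+ x. ennreal (fY x) \<partial>count_space UNIV) = 1"
    by (simp add: nn_integral_count_space_finite fY_nonneg fY_sum)
qed

lemma pmf_PX: "pmf PX True = 1 / b" "pmf PX False = 1 - 1 / b"
  unfolding PX_def using b_ge1 by auto

lemma gX_meas: "gX bb \<in> borel_measurable borel"
  unfolding gX_def
  by (intro borel_measurable_continuous_onI continuous_on_vec_lambda) (auto intro!: continuous_intros)

lemma gY_meas: "gY q \<in> borel_measurable borel"
  unfolding gY_def
  by (intro borel_measurable_continuous_onI continuous_on_vec_lambda) (auto intro!: continuous_intros)

lemma MX_prob: "prob_space MX" unfolding MX_def by (rule mix_prob[OF gX_meas])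
lemma MY_prob: "prob_space MY" unfolding MY_def by (rule mix_prob[OF gY_meas])

lemma measure_U_Icc:
  assumes "B \<in> sets borel" "{0..1} \<inter> B = {0..m}" "0 \<le> m"
  shows "measure U B = m"
  using assms by (simp add: measure_def emeasure_U)

lemma gX_comp: "gX bb s $ c $ t = (if bb then k c t else 0) * \<bar>s\<bar>"
  unfolding gX_def by simp

lemma gY_comp: "gY q s $ c $ t = (if q = Some t then k c t else 0) * \<bar>s\<bar>"
  unfolding gY_def by simp

lemma MX_cdf:
  assumes u: "\<forall>t. 0 \<le> u$t"
  shows "measure MX {x. \<forall>t. x$c$t \<le> u$t} = (1 - 1/b) + (1/b) * Min ((\<lambda>t. min (u$t / k c t) 1) ` UNIV)"
proof -
  interpret U: prob_space U by (rule U_prob)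
  define m where "m = Min ((\<lambda>t. min (u$t / k c t) 1) ` UNIV)"
  have m_ge: "0 \<le> m" unfolding m_def using u k_pos
    by (subst Min_ge_iff) (auto intro: divide_nonneg_pos)
  have m_iff: "s \<le> m \<longleftrightarrow> (\<forall>t. s \<le> u$t / k c t) \<and> s \<le> 1" for s
    unfolding m_def by (subst Min_ge_iff) auto
  have "{0..1} \<inter> {s. \<forall>t. gX True s $ c $ t \<le> u$t} = {0..m}"
    using k_pos by (auto simp: gX_comp m_iff pos_le_divide_eq mult.commute)
  then have T: "measure U {s. \<forall>t. gX True s $ c $ t \<le> u$t} = m"
    by (intro measure_U_Icc m_ge) (auto simp: gX_comp)
  have F: "{s. \<forall>t. gX False s $ c $ t \<le> u$t} = UNIV"
    using u by (auto simp: gX_comp)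
  have "measure MX {x. \<forall>t. x$c$t \<le> u$t} = (\<Sum>bb\<in>UNIV. pmf PX bb * measure U {s. gX bb s \<in> {x. \<forall>t. x$c$t \<le> u$t}})"
    unfolding MX_def by (rule mix_measure[OF gX_meas]) measurable
  also have "\<dots> = pmf PX False * 1 + pmf PX True * m"
    using U.prob_space by (simp add: UNIV_bool T F)
  finally show ?thesis unfolding m_def pmf_PX by simp
qed

lemma MY_cdf:
  assumes u: "\<forall>t. 0 \<le> u$t"
  shows "measure MY {x. \<forall>t. x$c$t \<le> u$t} = (1 - a/b) + (\<Sum>t\<in>UNIV. (Y t / X t / b) * min (u$t / k c t) 1)"
proof -
  interpret U: prob_space U by (rule U_prob)
  have S: "measure U {s. \<forall>t. gY (Some t0) s $ c $ t \<le> u$t} = min (u$t0 / k c t0) 1" for t0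
  proof (rule measure_U_Icc)
    show "{0..1} \<inter> {s. \<forall>t. gY (Some t0) s $ c $ t \<le> u$t} = {0..min (u$t0 / k c t0) 1}"
      using k_pos[of c t0] u by (auto simp: gY_comp pos_le_divide_eq mult.commute)
    show "0 \<le> min (u$t0 / k c t0) 1" using k_pos[of c t0] u by (auto intro: divide_nonneg_pos)
  qed (auto simp: gY_comp)
  have N: "{s. \<forall>t. gY None s $ c $ t \<le> u$t} = UNIV"
    using u by (auto simp: gY_comp)
  have "measure MY {x. \<forall>t. x$c$t \<le> u$t} = (\<Sum>q\<in>UNIV. pmf PY q * measure U {s. gY q s \<in> {x. \<forall>t. x$c$t \<le> u$t}})"
    unfolding MY_def by (rule mix_measure[OF gY_meas]) measurable
  also have "\<dots> = fY None * 1 + (\<Sum>t\<in>UNIV. fY (Some t) * min (u$t / k c t) 1)"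
    unfolding sum_option pmf_PY using U.prob_space by (simp add: S N)
  finally show ?thesis by (simp add: fY_def)
qed

lemma FX_eq: "FX_star v X Y c u = (1 - 1/b) + (1/b) * Min ((\<lambda>t. min (u$t / k c t) 1) ` UNIV)"
  using b_cases unfolding FX_star_def Let_def a_def[symmetric] k_def by auto

lemma FY_eq: "FY_star v X Y c u = (1 - a/b) + (\<Sum>t\<in>UNIV. (Y t / X t / b) * min (u$t / k c t) 1)"
proof (cases "a = 0")
  case True
  have "\<forall>t\<in>UNIV. Y t / X t = 0"
    using True unfolding a_def alpha_def
    by (subst (asm) sum_nonneg_eq_0_iff) (auto intro: divide_nonneg_pos Y_nonneg X_pos)
  then have "\<forall>t. Y t = 0" using X_pos by (simp add: less_imp_neq[symmetric])
  then show ?thesis using True b_cases unfolding FY_star_def Let_def a_def[symmetric] by auto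
next
  case False
  then show ?thesis using b_cases a_nonneg unfolding FY_star_def Let_def a_def[symmetric] k_def
    by (auto simp: sum_distrib_left)
qed

lemma nnU: "0 \<le> K \<Longrightarrow> (\<integral>\<^sup>+s. ennreal (K * \<bar>s\<bar>) \<partial>U) = ennreal (K / 2)"
proof -
  assume K: "0 \<le> K"
  have "(\<integral>\<^sup>+s. ennreal (K * \<bar>s\<bar>) \<partial>U) = (\<integral>\<^sup>+s. ennreal K * ennreal \<bar>s\<bar> \<partial>U)"
    using K by (simp add: ennreal_mult)
  also have "\<dots> = ennreal K * (\<integral>\<^sup>+s. ennreal \<bar>s\<bar> \<partial>U)"
    by (rule nn_integral_cmult) measurable
  also have "\<dots> = ennreal K * ennreal (1/2)" by (simp only: nn_integral_U_abs)
  also have "\<dots> = ennreal (K / 2)" using ennreal_mult[OF K, of "1/2"] by simp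
  finally show ?thesis .
qed

lemma sum_k: "(\<Sum>c\<in>UNIV. k c t) = 2 * X t * b"
proof -
  have "(\<Sum>c\<in>UNIV. k c t) = (\<Sum>c\<in>UNIV. v c) * (2 * X t * b)"
    unfolding k_def sum_distrib_right by (intro sum.cong refl) (simp add: mult_ac)
  then show ?thesis using v_sum by simp
qed

lemma sum_gX: "(\<Sum>c\<in>UNIV. gX bb s $c$t) = (if bb then 2 * X t * b else 0) * \<bar>s\<bar>"
  by (cases bb) (simp_all add: gX_comp sum_distrib_right[symmetric] sum_k)

lemma sum_gY: "(\<Sum>c\<in>UNIV. gY q s $c$t) = (if q = Some t then 2 * X t * b else 0) * \<bar>s\<bar>"
  by (cases "q = Some t") (simp_all add: gY_comp sum_distrib_right[symmetric] sum_k)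

lemma MX_strat: "MX \<in> strategies X"
proof -
  have nn: "AE x in MX. \<forall>c t. 0 \<le> x$c$t"
    unfolding MX_def mix_def
    by (subst AE_distr_iff[OF mix_meas[OF gX_meas]])
       (auto simp: gX_comp intro!: AE_I2 mult_nonneg_nonneg less_imp_le[OF k_pos])
  have bud: "(\<integral>\<^sup>+x. ennreal (\<Sum>c\<in>UNIV. x$c$t) \<partial>MX) = ennreal (X t)" for t
  proof -
    have "(\<integral>\<^sup>+x. ennreal (\<Sum>c\<in>UNIV. x$c$t) \<partial>MX)
        = (\<Sum>bb\<in>UNIV. ennreal (pmf PX bb) * (\<integral>\<^sup>+s. ennreal (\<Sum>c\<in>UNIV. gX bb s $c$t) \<partial>U))"
      unfolding MX_def by (rule mix_nn[OF gX_meas]) measurable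
    also have "\<dots> = (\<Sum>bb\<in>UNIV. ennreal (pmf PX bb) * (\<integral>\<^sup>+s. ennreal ((if bb then 2 * X t * b else 0) * \<bar>s\<bar>) \<partial>U))"
      by (simp only: sum_gX)
    also have "\<dots> = ennreal (1/b * (2 * X t * b / 2))"
      using X_pos[of t] b_pos b_ge1
      by (simp add: UNIV_bool nnU pmf_PX ennreal_mult[symmetric])
    also have "\<dots> = ennreal (X t)" using b_pos by simp
    finally show ?thesis .
  qed
  have "sets MX = sets borel" by (simp add: MX_def)
  then show ?thesis unfolding strategies_def using MX_prob nn bud by auto
qed

lemma MY_strat: "MY \<in> strategies Y"
proof -
  have nn: "AE x in MY. \<forall>c t. 0 \<le> x$c$t"
    unfolding MY_def mix_def
    by (subst AE_distr_iff[OF mix_meas[OF gY_meas]])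
       (auto simp: gY_comp intro!: AE_I2 mult_nonneg_nonneg less_imp_le[OF k_pos])
  have bud: "(\<integral>\<^sup>+x. ennreal (\<Sum>c\<in>UNIV. x$c$t) \<partial>MY) = ennreal (Y t)" for t
  proof -
    have "(\<integral>\<^sup>+x. ennreal (\<Sum>c\<in>UNIV. x$c$t) \<partial>MY)
        = (\<Sum>q\<in>UNIV. ennreal (pmf PY q) * (\<integral>\<^sup>+s. ennreal (\<Sum>c\<in>UNIV. gY q s $c$t) \<partial>U))"
      unfolding MY_def by (rule mix_nn[OF gY_meas]) measurable
    also have "\<dots> = (\<Sum>q\<in>UNIV. ennreal (fY q) * (\<integral>\<^sup>+s. ennreal ((if q = Some t then 2 * X t * b else 0) * \<bar>s\<bar>) \<partial>U))"
      by (simp only: sum_gY pmf_PY)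
    also have "\<dots> = (\<Sum>q\<in>UNIV. ennreal (fY q * ((if q = Some t then 2 * X t * b else 0) / 2)))"
      using X_pos[of t] b_pos
      by (intro sum.cong refl) (simp add: nnU ennreal_mult[symmetric] fY_nonneg)
    also have "\<dots> = ennreal (\<Sum>q\<in>UNIV. fY q * ((if q = Some t then 2 * X t * b else 0) / 2))"
      using X_pos[of t] b_pos by (intro sum_ennreal) (auto intro!: mult_nonneg_nonneg fY_nonneg)
    also have "(\<Sum>q\<in>UNIV. fY q * ((if q = Some t then 2 * X t * b else 0) / 2)) = fY (Some t) * (X t * b)"
    proof -
      have "(\<lambda>q. fY q * ((if q = Some t then 2 * X t * b else 0) / 2)) = (\<lambda>q. if q = Some t then fY q * (X t * b) else 0)"
        by (auto simp: fun_eq_iff)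
      then show ?thesis by (simp only: sum.delta) simp
    qed
    also have "fY (Some t) * (X t * b) = Y t"
      using X_pos[of t] b_pos by (simp add: fY_def)
    finally show ?thesis .
  qed
  have "sets MY = sets borel" by (simp add: MY_def)
  then show ?thesis unfolding strategies_def using MY_prob nn bud by auto
qed

lemma vk: "v c / k c t = 1 / (2 * X t * b)"
  unfolding k_def using v_pos[of c] by simp

lemma MX_surv:
  assumes y: "\<forall>t. 0 \<le> y$t"
  shows "(1/b) * (1 - (\<Sum>t\<in>UNIV. y$t / k c t)) \<le> measure MX {x. \<forall>t. y$t \<le> x$c$t}"
proof -
  interpret U: prob_space U by (rule U_prob)
  define S where "S = (\<Sum>t\<in>UNIV. y$t / k c t)"
  have S0: "0 \<le> S" unfolding S_def using y k_pos by (auto intro!: sum_nonneg divide_nonneg_pos)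
  have sub: "{s. S \<le> s} \<subseteq> {s. \<forall>t. y$t \<le> gX True s $ c $ t}"
  proof safe
    fix s t assume s: "S \<le> s"
    have "y$t / k c t \<le> S" unfolding S_def
      by (rule member_le_sum) (use y k_pos in \<open>auto intro: divide_nonneg_pos\<close>)
    then have "y$t / k c t \<le> \<bar>s\<bar>" using s by simp
    then show "y$t \<le> gX True s $ c $ t"
      using k_pos[of c t] by (simp add: gX_comp pos_divide_le_eq mult.commute)
  qed
  have m1: "1 - S \<le> measure U {s. \<forall>t. y$t \<le> gX True s $ c $ t}"
    using measure_U_ge[OF S0] U.finite_measure_mono[OF sub]
    by (simp add: gX_comp)
  have "measure MX {x. \<forall>t. y$t \<le> x$c$t} = (\<Sum>bb\<in>UNIV. pmf PX bb * measure U {s. gX bb s \<in> {x. \<forall>t. y$t \<le> x$c$t}})"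
    unfolding MX_def by (rule mix_measure[OF gX_meas]) measurable
  also have "\<dots> = (1 - 1/b) * measure U {s. \<forall>t. y$t \<le> gX False s $ c $ t} + (1/b) * measure U {s. \<forall>t. y$t \<le> gX True s $ c $ t}"
    by (simp add: UNIV_bool pmf_PX)
  finally have eq: "measure MX {x. \<forall>t. y$t \<le> x$c$t} = (1 - 1/b) * measure U {s. \<forall>t. y$t \<le> gX False s $ c $ t} + (1/b) * measure U {s. \<forall>t. y$t \<le> gX True s $ c $ t}" .
  have i1: "(1/b) * (1 - S) \<le> (1/b) * measure U {s. \<forall>t. y$t \<le> gX True s $ c $ t}"
    by (rule mult_left_mono[OF m1]) (use b_pos in simp)
  have "0 \<le> 1 - 1/b" using b_ge1 by simp
  then have i2: "0 \<le> (1 - 1/b) * measure U {s. \<forall>t. y$t \<le> gX False s $ c $ t}"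
    by (intro mult_nonneg_nonneg measure_nonneg)
  have "(1/b) * (1 - S) \<le> measure MX {x. \<forall>t. y$t \<le> x$c$t}"
    unfolding eq using i1 i2 by linarith
  then show ?thesis unfolding S_def .
qed

end


context game begin

lemma MX_marg: "\<forall>t. 0 \<le> u$t \<Longrightarrow> marginal MX c u = FX_star v X Y c u"
  unfolding marginal_def FX_eq by (rule MX_cdf)

lemma MY_marg: "\<forall>t. 0 \<le> u$t \<Longrightarrow> marginal MY c u = FY_star v X Y c u"
  unfolding marginal_def FY_eq by (rule MY_cdf)

lemma K1:
  assumes F: "F \<in> strategies X"
    and mF: "\<forall>c u. (\<forall>t. 0 \<le> u$t) \<longrightarrow> marginal F c u = FX_star v X Y c u"
    and G: "G \<in> strategies Y"
  shows "L a \<le> payoff_X v F G"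
proof -
  note sF = strat_basic[OF F] and sG = strat_basic[OF G] and sM = strat_basic[OF MX_strat]
  interpret G: prob_space G by (rule sG(1))
  have dist: "distr F borel (\<lambda>x. x$c) = distr MX borel (\<lambda>x. x$c)" for c
    by (rule marg_unique[OF sF(1,2,4) sM(1,2,4)]) (simp add: mF MX_marg)
  have meq: "measure F {x. \<forall>t. y$c$t \<le> x$c$t} = measure MX {x. \<forall>t. y$c$t \<le> x$c$t}" for y c
  proof -
    have mF': "(\<lambda>x. x$c) \<in> measurable F borel"
      unfolding measurable_cong_sets[OF sF(2) refl] by measurable
    have mM': "(\<lambda>x. x$c) \<in> measurable MX borel"
      unfolding measurable_cong_sets[OF sM(2) refl] by measurable
    have A: "{z::real^'t. \<forall>t. y$c$t \<le> z$t} \<in> sets borel" by measurable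
    have pre: "(\<lambda>x. x$c) -` {z. \<forall>t. y$c$t \<le> z$t} = {x. \<forall>t. y$c$t \<le> x$c$t}" by auto
    show ?thesis
      using measure_distr[OF mF' A] measure_distr[OF mM' A] dist[of c] sF(3) sM(3)
      by (simp add: pre)
  qed
  define lo where "lo y = 1/b - (\<Sum>t\<in>UNIV. (1 / (2 * X t * b^2)) * (\<Sum>c\<in>UNIV. y$c$t))" for y :: "real^'t^'c"
  have pay: "payoff_X v F G = (\<integral>y. (\<Sum>c\<in>UNIV. v c * measure MX {x. \<forall>t. y$c$t \<le> x$c$t}) \<partial>G)"
    using payoff_fubini(3)[OF sF(1,2) sG(1,2), of v] by (simp add: meq)
  have int: "integrable G (\<lambda>y. \<Sum>c\<in>UNIV. v c * measure MX {x. \<forall>t. y$c$t \<le> x$c$t})"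
    using payoff_fubini(4)[OF sF(1,2) sG(1,2), of v] by (simp add: meq)
  have intb: "integrable G (\<lambda>y. \<Sum>c\<in>UNIV. y$c$t)" for t
    by (rule strat_budget(1)[OF G Y_nonneg])
  have intlo: "integrable G lo"
    unfolding lo_def using intb by (intro Bochner_Integration.integrable_diff integrable_sum integrable_mult_right) auto
  have pt: "lo y \<le> (\<Sum>c\<in>UNIV. v c * measure MX {x. \<forall>t. y$c$t \<le> x$c$t})" if y: "\<forall>c t. 0 \<le> y$c$t" for y
  proof -
    have "(\<Sum>c\<in>UNIV. v c * ((1/b) * (1 - (\<Sum>t\<in>UNIV. (y$c)$t / k c t)))) \<le> (\<Sum>c\<in>UNIV. v c * measure MX {x. \<forall>t. y$c$t \<le> x$c$t})"
      using y v_pos by (intro sum_mono mult_left_mono MX_surv) (auto intro: less_imp_le)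
    moreover have "(\<Sum>c\<in>UNIV. v c * ((1/b) * (1 - (\<Sum>t\<in>UNIV. (y$c)$t / k c t)))) = lo y"
    proof -
      have "v c * ((1/b) * (1 - (\<Sum>t\<in>UNIV. (y$c)$t / k c t))) = v c / b - (\<Sum>t\<in>UNIV. (1 / (2 * X t * b^2)) * y$c$t)" for c
      proof -
        have "v c * ((1/b) * (1 - (\<Sum>t\<in>UNIV. (y$c)$t / k c t))) = v c / b - (\<Sum>t\<in>UNIV. (v c / k c t) * y$c$t / b)"
          by (simp add: sum_distrib_left sum_divide_distrib right_diff_distrib field_simps)
        also have "\<dots> = v c / b - (\<Sum>t\<in>UNIV. (1 / (2 * X t * b^2)) * y$c$t)"
          unfolding vk using b_pos by (simp add: power2_eq_square mult.assoc)
        finally show ?thesis .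
      qed
      then have "(\<Sum>c\<in>UNIV. v c * ((1/b) * (1 - (\<Sum>t\<in>UNIV. (y$c)$t / k c t))))
          = (\<Sum>c\<in>UNIV. v c) / b - (\<Sum>c\<in>UNIV. \<Sum>t\<in>UNIV. (1 / (2 * X t * b^2)) * y$c$t)"
        by (simp add: sum_subtractf sum_divide_distrib)
      also have "\<dots> = lo y"
        unfolding lo_def v_sum by (subst sum.swap) (simp add: sum_distrib_left)
      finally show ?thesis .
    qed
    ultimately show ?thesis by simp
  qed
  have "(\<integral>y. lo y \<partial>G) \<le> payoff_X v F G"
    unfolding pay using sG(4) by (intro integral_mono_AE[OF intlo int]) (auto elim!: eventually_mono intro: pt)
  moreover have "(\<integral>y. lo y \<partial>G) = 1/b - (\<Sum>t\<in>UNIV. (1 / (2 * X t * b^2)) * (\<integral>y. (\<Sum>c\<in>UNIV. y$c$t) \<partial>G))"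
    unfolding lo_def using intb G.prob_space
    by (subst Bochner_Integration.integral_diff) (auto intro!: integrable_sum simp: Bochner_Integration.integral_sum)
  moreover have "(\<Sum>t\<in>UNIV. (1 / (2 * X t * b^2)) * (\<integral>y. (\<Sum>c\<in>UNIV. y$c$t) \<partial>G)) \<le> (\<Sum>t\<in>UNIV. (1 / (2 * X t * b^2)) * Y t)"
    using X_pos b_pos by (intro sum_mono mult_left_mono strat_budget(2)[OF G Y_nonneg]) (auto intro: less_imp_le)
  moreover have "(\<Sum>t\<in>UNIV. (1 / (2 * X t * b^2)) * Y t) = a / (2 * b^2)"
    unfolding a_def alpha_def by (simp add: sum_divide_distrib mult_ac)
  ultimately show ?thesis unfolding L_b(1) by linarith
qed

lemma K2:
  assumes G: "G \<in> strategies Y"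
    and mG: "\<forall>c u. (\<forall>t. 0 \<le> u$t) \<longrightarrow> marginal G c u = FY_star v X Y c u"
    and F: "F \<in> strategies X"
  shows "payoff_X v F G \<le> L a"
proof -
  note sF = strat_basic[OF F] and sG = strat_basic[OF G]
  interpret F: prob_space F by (rule sF(1))
  define hi where "hi x = (1 - a/b) + (\<Sum>t\<in>UNIV. (Y t / (2 * X t^2 * b^2)) * (\<Sum>c\<in>UNIV. x$c$t))" for x :: "real^'t^'c"
  note pay = payoff_fubini(1)[OF sF(1,2) sG(1,2), of v]
  note int = payoff_fubini(2)[OF sF(1,2) sG(1,2), of v]
  have intb: "integrable F (\<lambda>x. \<Sum>c\<in>UNIV. x$c$t)" for t
    by (rule strat_budget(1)[OF F less_imp_le[OF X_pos]])
  have inthi: "integrable F hi"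
    unfolding hi_def using intb by (intro Bochner_Integration.integrable_add integrable_sum integrable_mult_right) auto
  have pt: "(\<Sum>c\<in>UNIV. v c * measure G {y. \<forall>t. y$c$t \<le> x$c$t}) \<le> hi x" if x: "\<forall>c t. 0 \<le> x$c$t" for x
  proof -
    have "v c * measure G {y. \<forall>t. y$c$t \<le> x$c$t} \<le> v c * (1 - a/b) + (\<Sum>t\<in>UNIV. (Y t / (2 * X t^2 * b^2)) * x$c$t)" for c
    proof -
      have "measure G {y. \<forall>t. y$c$t \<le> x$c$t} = (1 - a/b) + (\<Sum>t\<in>UNIV. (Y t / X t / b) * min (x$c$t / k c t) 1)"
        using mG x unfolding marginal_def FY_eq by auto
      also have "\<dots> \<le> (1 - a/b) + (\<Sum>t\<in>UNIV. (Y t / X t / b) * (x$c$t / k c t))"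
        using X_pos Y_nonneg b_pos
        by (intro add_left_mono sum_mono mult_left_mono) (auto intro!: divide_nonneg_pos)
      finally have "v c * measure G {y. \<forall>t. y$c$t \<le> x$c$t} \<le> v c * ((1 - a/b) + (\<Sum>t\<in>UNIV. (Y t / X t / b) * (x$c$t / k c t)))"
        using v_pos[of c] by (intro mult_left_mono) auto
      also have "\<dots> = v c * (1 - a/b) + (\<Sum>t\<in>UNIV. (Y t / X t / b) * (v c / k c t) * x$c$t)"
        by (simp add: distrib_left sum_distrib_left mult_ac)
      also have "\<dots> = v c * (1 - a/b) + (\<Sum>t\<in>UNIV. (Y t / (2 * X t^2 * b^2)) * x$c$t)"
        unfolding vk using X_pos b_pos by (simp add: power2_eq_square mult_ac)
      finally show ?thesis .
    qed
    then have "(\<Sum>c\<in>UNIV. v c * measure G {y. \<forall>t. y$c$t \<le> x$c$t}) \<le> (\<Sum>c\<in>UNIV. v c * (1 - a/b) + (\<Sum>t\<in>UNIV. (Y t / (2 * X t^2 * b^2)) * x$c$t))"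
      by (rule sum_mono)
    also have "\<dots> = hi x"
      unfolding hi_def sum.distrib sum_distrib_right[symmetric] v_sum
      by (subst sum.swap) (simp add: sum_distrib_left)
    finally show ?thesis .
  qed
  have "payoff_X v F G \<le> (\<integral>x. hi x \<partial>F)"
    unfolding pay using sF(4) by (intro integral_mono_AE[OF int inthi]) (auto elim!: eventually_mono intro: pt)
  moreover have "(\<integral>x. hi x \<partial>F) = (1 - a/b) + (\<Sum>t\<in>UNIV. (Y t / (2 * X t^2 * b^2)) * (\<integral>x. (\<Sum>c\<in>UNIV. x$c$t) \<partial>F))"
    unfolding hi_def using intb F.prob_space
    by (subst Bochner_Integration.integral_add) (auto intro!: integrable_sum simp: Bochner_Integration.integral_sum)
  moreover have "(\<Sum>t\<in>UNIV. (Y t / (2 * X t^2 * b^2)) * (\<integral>x. (\<Sum>c\<in>UNIV. x$c$t) \<partial>F)) \<le> (\<Sum>t\<in>UNIV. (Y t / (2 * X t^2 * b^2)) * X t)"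
    using X_pos Y_nonneg b_pos
    by (intro sum_mono mult_left_mono strat_budget(2)[OF F less_imp_le[OF X_pos]]) (auto intro!: divide_nonneg_pos)
  moreover have "(\<Sum>t\<in>UNIV. (Y t / (2 * X t^2 * b^2)) * X t) = a / (2 * b^2)"
    unfolding a_def alpha_def sum_divide_distrib using X_pos
    by (intro sum.cong refl) (simp add: power2_eq_square field_simps)
  ultimately show ?thesis unfolding L_b(2) by linarith
qed

lemma marg_equilibrium:
  assumes F: "F \<in> strategies X" and G: "G \<in> strategies Y"
    and m: "\<forall>c u. (\<forall>t. 0 \<le> u$t) \<longrightarrow> marginal F c u = FX_star v X Y c u \<and> marginal G c u = FY_star v X Y c u"
  shows "equilibrium v X Y F G" "payoff_X v F G = L a"
proof -
  have mF: "\<forall>c u. (\<forall>t. 0 \<le> u$t) \<longrightarrow> marginal F c u = FX_star v X Y c u" using m by blast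
  have mG: "\<forall>c u. (\<forall>t. 0 \<le> u$t) \<longrightarrow> marginal G c u = FY_star v X Y c u" using m by blast
  have eq: "payoff_X v F G = L a"
    using K1[OF F mF G] K2[OF G mG F] by linarith
  then show "payoff_X v F G = L a" .
  show "equilibrium v X Y F G"
    unfolding equilibrium_def using F G eq K1[OF F mF] K2[OF G mG] by auto
qed

lemma MXY_marg: "\<forall>c u. (\<forall>t. 0 \<le> u$t) \<longrightarrow> marginal MX c u = FX_star v X Y c u \<and> marginal MY c u = FY_star v X Y c u"
  using MX_marg MY_marg by blast

lemma eq_value:
  assumes "equilibrium v X Y F G"
  shows "payoff_X v F G = L a"
proof -
  have F: "F \<in> strategies X" and G: "G \<in> strategies Y"
    and bF: "\<And>F'. F' \<in> strategies X \<Longrightarrow> payoff_X v F' G \<le> payoff_X v F G"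
    and bG: "\<And>G'. G' \<in> strategies Y \<Longrightarrow> payoff_X v F G \<le> payoff_X v F G'"
    using assms unfolding equilibrium_def by auto
  have mX: "\<forall>c u. (\<forall>t. 0 \<le> u$t) \<longrightarrow> marginal MX c u = FX_star v X Y c u" using MX_marg by blast
  have mY: "\<forall>c u. (\<forall>t. 0 \<le> u$t) \<longrightarrow> marginal MY c u = FY_star v X Y c u" using MY_marg by blast
  have "L a \<le> payoff_X v MX G" by (rule K1[OF MX_strat mX G])
  moreover have "payoff_X v MX G \<le> payoff_X v F G" by (rule bF[OF MX_strat])
  moreover have "payoff_X v F G \<le> payoff_X v F MY" by (rule bG[OF MY_strat])
  moreover have "payoff_X v F MY \<le> L a" by (rule K2[OF MY_strat mY F])
  ultimately show ?thesis by linarith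
qed

end

theorem theorem2:
  fixes v :: "'c::finite \<Rightarrow> real" and X Y :: "'t::finite \<Rightarrow> real"
  assumes v_pos: "\<And>c. v c > 0"
    and v_sum: "(\<Sum>c\<in>UNIV. v c) = 1"
    and X_pos: "\<And>t. X t > 0"
    and Y_nonneg: "\<And>t. Y t \<ge> 0"
  shows "(\<exists>F G. equilibrium v X Y (F :: (real^'t^'c) measure) G)
    \<and> (\<forall>F G. equilibrium v X Y (F :: (real^'t^'c) measure) G \<longrightarrow>
          payoff_X v F G = L (alpha X Y) \<and> payoff_Y v F G = 1 - L (alpha X Y))
    \<and> (\<exists>F G. F \<in> strategies X \<and> G \<in> strategies Y \<and>
          (\<forall>c u. (\<forall>t. 0 \<le> u$t) \<longrightarrow>
             marginal (F :: (real^'t^'c) measure) c u = FX_star v X Y c u \<and>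
             marginal G c u = FY_star v X Y c u))
    \<and> (\<forall>F G. F \<in> strategies X \<and> G \<in> strategies Y \<and>
          (\<forall>c u. (\<forall>t. 0 \<le> u$t) \<longrightarrow>
             marginal (F :: (real^'t^'c) measure) c u = FX_star v X Y c u \<and>
             marginal G c u = FY_star v X Y c u)
          \<longrightarrow> equilibrium v X Y F G)"
proof -
  interpret game v X Y using assms by unfold_locales auto
  have c1: "\<exists>F G. equilibrium v X Y (F :: (real^'t^'c) measure) G"
    using marg_equilibrium(1)[OF MX_strat MY_strat MXY_marg] by blast
  have c2: "\<forall>F G. equilibrium v X Y (F :: (real^'t^'c) measure) G \<longrightarrow>
          payoff_X v F G = L (alpha X Y) \<and> payoff_Y v F G = 1 - L (alpha X Y)"
    using eq_value unfolding payoff_Y_def a_def by simp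
  have c3: "\<exists>F G. F \<in> strategies X \<and> G \<in> strategies Y \<and>
          (\<forall>c u. (\<forall>t. 0 \<le> u$t) \<longrightarrow>
             marginal (F :: (real^'t^'c) measure) c u = FX_star v X Y c u \<and>
             marginal G c u = FY_star v X Y c u)"
    using MX_strat MY_strat MXY_marg by blast
  have c4: "\<forall>F G. F \<in> strategies X \<and> G \<in> strategies Y \<and>
          (\<forall>c u. (\<forall>t. 0 \<le> u$t) \<longrightarrow>
             marginal (F :: (real^'t^'c) measure) c u = FX_star v X Y c u \<and>
             marginal G c u = FY_star v X Y c u)
          \<longrightarrow> equilibrium v X Y F G"
    using marg_equilibrium(1) by blast
  show ?thesis using c1 c2 c3 c4 by blast
qed


end
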